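(* The metric space $(\mathfrak S_1(\mathbb T),d)$ is complete.
   Context: A rigged subset $S$ of a set $X$ assigns to each $x$ a multiplicity $\mathrm{mult}(x;S)\in\{0,1,\dots,\infty\}$; an enumeration is a sequence in which each $x$ appears $\mathrm{mult}(x;S)$ times. $\mathfrak S_\infty(\mathbb T)$ consists of countable rigged subsets of the unit circle $\mathbb T$ (arc-length metric) in which $1$ has multiplicity $\infty$ and with no other accumulation point (point every neighbourhood of which contains infinitely many elements counting multiplicity). $d(S,T)=\inf\sum_j\mathrm{dist}(s_j,t_j)$ over all enumerations $(s_j),(t_j)$ of $S,T$, and $\mathfrak S_1(\mathbb T)=\{S\in\mathfrak S_\infty(\mathbb T):d(S,\mathbf 1)<\infty\}$, with $\mathbf 1$ the rigged set consisting of $1$ with infinite multiplicity. *)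

theory Defs
  imports "HOL-Analysis.Analysis" "HOL-Library.Extended_Nat" "HOL-Library.Extended_Nonnegative_Real"
begin

text \<open>A rigged subset of the unit circle T (= sphere 0 1 in the complex plane) is
  represented by its multiplicity function, which vanishes off T.\<close>

type_synonym rigged = "complex \<Rightarrow> enat"

definition circle :: "complex set" where
  "circle = sphere 0 1"

text \<open>Arc-length distance on the unit circle (chord c corresponds to arc 2 arcsin (c/2)).\<close>
definition arcdist :: "complex \<Rightarrow> complex \<Rightarrow> real" where
  "arcdist z w = 2 * arcsin (cmod (z - w) / 2)"

definition rsupp :: "rigged \<Rightarrow> complex set" where
  "rsupp S = {x. S x \<noteq> 0}"

definition rigged_on_circle :: "rigged \<Rightarrow> bool" where
  "rigged_on_circle S \<longleftrightarrow> rsupp S \<subseteq> circle"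

text \<open>Every neighbourhood of x contains infinitely many elements counting multiplicity.\<close>
definition accpt :: "rigged \<Rightarrow> complex \<Rightarrow> bool" where
  "accpt S x \<longleftrightarrow> (\<forall>U. open U \<and> x \<in> U \<longrightarrow>
      infinite (U \<inter> rsupp S) \<or> (\<exists>y\<in>U. S y = \<infinity>))"

definition S_inf :: "rigged set" where
  "S_inf = {S. rigged_on_circle S \<and> countable (rsupp S) \<and> S 1 = \<infinity> \<and>
                (\<forall>x\<in>circle. accpt S x \<longrightarrow> x = 1)}"

definition ecount :: "(nat \<Rightarrow> complex) \<Rightarrow> complex \<Rightarrow> enat" where
  "ecount s x = (if finite {j. s j = x} then enat (card {j. s j = x}) else \<infinity>)"

definition is_enum :: "rigged \<Rightarrow> (nat \<Rightarrow> complex) \<Rightarrow> bool" where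
  "is_enum S s \<longleftrightarrow> (\<forall>x. ecount s x = S x)"

definition rdist :: "rigged \<Rightarrow> rigged \<Rightarrow> ennreal" where
  "rdist S T = (INF st \<in> {(s, t). is_enum S s \<and> is_enum T t}.
                  (\<Sum>j. ennreal (arcdist (fst st j) (snd st j))))"

definition one_rigged :: rigged where
  "one_rigged = (\<lambda>x. if x = 1 then \<infinity> else 0)"

definition S_one :: "rigged set" where
  "S_one = {S \<in> S_inf. rdist S one_rigged < \<infinity>}"

text \<open>Real-valued version of d (finite on S_one).\<close>
definition rdist_real :: "rigged \<Rightarrow> rigged \<Rightarrow> real" where
  "rdist_real S T = enn2real (rdist S T)"

end

theory Submission
  imports Defs
begin

lemma unit_sub_one_norm:
  fixes t :: real
  shows "cmod (exp (\<i> * of_real t) - 1) = 2 * \<bar>sin (t/2)\<bar>"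
proof -
  have "exp (\<i> * of_real t) - 1 = exp (\<i> * of_real (t/2)) * (exp (\<i> * of_real (t/2)) - exp (- (\<i> * of_real (t/2))))"
    by (simp add: algebra_simps flip: exp_add) 
  also have "exp (\<i> * of_real (t/2)) - exp (- (\<i> * of_real (t/2))) = 2 * \<i> * sin (of_real (t/2))"
    by (simp add: sin_exp_eq)
  also have "sin (complex_of_real (t/2)) = complex_of_real (sin (t/2))"
    by (rule sin_of_real)
  finally show ?thesis by (simp add: norm_mult)
qed

lemma arcsin_abs_sin_half:
  assumes "\<bar>t\<bar> \<le> pi"
  shows "2 * arcsin \<bar>sin (t/2)\<bar> = \<bar>t\<bar>"
proof -
  have "\<bar>sin (t/2)\<bar> = sin (\<bar>t\<bar>/2)"
  proof (cases "t \<ge> 0")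
    case True then show ?thesis using assms by (auto simp: sin_ge_zero)
  next
    case False
    have "0 \<le> sin (-t/2)" using assms False by (intro sin_ge_zero) auto
    then show ?thesis using False by (simp add: sin_minus)
  qed
  moreover have "arcsin (sin (\<bar>t\<bar>/2)) = \<bar>t\<bar>/2"
    using assms by (intro arcsin_sin) auto
  ultimately show ?thesis by simp
qed

lemma circle_norm: "z \<in> circle \<Longrightarrow> cmod z = 1"
  by (simp add: circle_def)

lemma arcdist_Arg:
  assumes "z \<in> circle" "w \<in> circle"
  shows "arcdist z w = \<bar>Arg (z * cnj w)\<bar>"
proof -
  let ?q = "z * cnj w"
  have nq: "cmod ?q = 1" using assms by (simp add: circle_norm norm_mult)
  hence q0: "?q \<noteq> 0" by auto
  have qe: "?q = exp (\<i> * of_real (Arg ?q))"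
    using Arg_eq[OF q0] nq by simp
  have "w * cnj w = 1" using assms circle_norm
    by (metis complex_norm_square mult.commute of_real_1 power_one)
  hence "z - w = (?q - 1) * w" by (simp add: algebra_simps)
  hence "cmod (z - w) = cmod (?q - 1)" using assms by (simp add: norm_mult circle_norm)
  also have "\<dots> = 2 * \<bar>sin (Arg ?q / 2)\<bar>" by (subst qe) (rule unit_sub_one_norm)
  finally have "arcdist z w = 2 * arcsin \<bar>sin (Arg ?q / 2)\<bar>" by (simp add: arcdist_def)
  also have "\<dots> = \<bar>Arg ?q\<bar>"
    using mpi_less_Arg[of ?q] Arg_le_pi[of ?q] by (intro arcsin_abs_sin_half) auto
  finally show ?thesis .
qed

lemma abs_Arg_mult_le:
  assumes "cmod a = 1" "cmod b = 1"
  shows "\<bar>Arg (a * b)\<bar> \<le> \<bar>Arg a\<bar> + \<bar>Arg b\<bar>"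
proof (cases "\<bar>Arg a\<bar> + \<bar>Arg b\<bar> < pi")
  case False
  then show ?thesis using mpi_less_Arg[of "a*b"] Arg_le_pi[of "a*b"] by linarith
next
  case True
  have a0: "a \<noteq> 0" "b \<noteq> 0" using assms by auto
  have "a * b = exp (\<i> * of_real (Arg a)) * exp (\<i> * of_real (Arg b))"
    using Arg_eq[OF a0(1)] Arg_eq[OF a0(2)] assms by simp
  also have "\<dots> = exp (\<i> * of_real (Arg a + Arg b))"
    by (simp add: algebra_simps flip: exp_add)
  finally have "Arg (a*b) = Arg a + Arg b"
    using True by (simp add: Arg_exp)
  then show ?thesis by simp
qed

lemma arcdist_triangle:
  assumes "x \<in> circle" "y \<in> circle" "z \<in> circle"
  shows "arcdist x z \<le> arcdist x y + arcdist y z"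
proof -
  have "y * cnj y = 1" using assms circle_norm
    by (metis complex_norm_square mult.commute of_real_1 power_one)
  hence "x * cnj z = (x * cnj y) * (y * cnj z)"
    by (metis mult.assoc mult.left_commute mult_1_right)
  note eq = this
  have q1: "cmod (x * cnj y) = 1" and q2: "cmod (y * cnj z) = 1"
    using assms by (simp_all add: norm_mult circle_norm)
  have "arcdist x z = \<bar>Arg (x * cnj z)\<bar>" by (rule arcdist_Arg[OF assms(1,3)])
  also have "\<dots> = \<bar>Arg ((x * cnj y) * (y * cnj z))\<bar>" by (simp only: eq)
  also have "\<dots> \<le> \<bar>Arg (x * cnj y)\<bar> + \<bar>Arg (y * cnj z)\<bar>" by (rule abs_Arg_mult_le[OF q1 q2])
  also have "\<dots> = arcdist x y + arcdist y z"
    using arcdist_Arg[OF assms(1,2)] arcdist_Arg[OF assms(2,3)] by simp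
  finally show ?thesis .
qed

lemma arcdist_sym: "arcdist z w = arcdist w z"
  by (simp add: arcdist_def norm_minus_commute)

lemma arcdist_self [simp]: "arcdist z z = 0"
  by (simp add: arcdist_def)

lemma arcdist_nonneg:
  assumes "z \<in> circle" "w \<in> circle"
  shows "arcdist z w \<ge> 0"
  using assms by (simp add: arcdist_Arg)

lemma circle_dist_le2:
  assumes "z \<in> circle" "w \<in> circle"
  shows "cmod (z - w) \<le> 2" "- 2 \<le> cmod (z - w)" "0 \<le> cmod (z - w) / 2" "cmod (z - w) / 2 \<le> 1"
proof -
  have "cmod (z - w) \<le> cmod z + cmod w" by (rule norm_triangle_ineq4)
  then show "cmod (z - w) \<le> 2" using assms by (simp add: circle_norm)
  then show "cmod (z - w) / 2 \<le> 1" by simp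
  show "- 2 \<le> cmod (z - w)" "0 \<le> cmod (z - w) / 2" using norm_ge_zero[of "z-w"] by linarith+
qed

lemma arcdist_ge_norm:
  assumes "z \<in> circle" "w \<in> circle"
  shows "cmod (z - w) \<le> arcdist z w"
proof -
  have "arcsin (cmod (z - w) / 2) \<ge> cmod (z - w) / 2"
  proof -
    have le: "cmod (z - w) \<le> 2" using circle_dist_le2[OF assms] by simp
    let ?a = "arcsin (cmod (z - w) / 2)"
    have "sin ?a = cmod (z - w) / 2" using circle_dist_le2[OF assms] sin_arcsin[of "cmod (z - w) / 2"] by linarith
    moreover have "?a \<ge> 0" using circle_dist_le2[OF assms] by (simp add: arcsin_nonneg)
    ultimately show ?thesis using abs_sin_x_le_abs_x[of ?a] by simp
  qed
  then show ?thesis by (simp add: arcdist_def)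
qed

lemma continuous_on_arcdist: "continuous_on circle (arcdist z)" if "z \<in> circle"
proof -
  have "\<forall>w\<in>circle. -1 \<le> cmod (z - w) / 2 \<and> cmod (z - w) / 2 \<le> 1"
    using that circle_dist_le2[of z] by auto
  then show ?thesis unfolding arcdist_def
    by (intro continuous_intros) auto
qed

lemma closed_circle: "closed circle" by (simp add: circle_def)


definition sumd :: "(nat \<Rightarrow> complex) \<Rightarrow> (nat \<Rightarrow> complex) \<Rightarrow> ennreal" where
  "sumd s t = (\<Sum>j. ennreal (arcdist (s j) (t j)))"

lemma rdist_sumd: "rdist S T = (INF st \<in> {(s, t). is_enum S s \<and> is_enum T t}. sumd (fst st) (snd st))"
  by (simp add: rdist_def sumd_def)

lemma rdist_le_sumd: "is_enum S s \<Longrightarrow> is_enum T t \<Longrightarrow> rdist S T \<le> sumd s t"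
  unfolding rdist_sumd by (rule INF_lower2[of "(s,t)"]) auto

lemma ecount_zero_iff: "ecount s x = 0 \<longleftrightarrow> x \<notin> range s"
  by (auto simp: ecount_def zero_enat_def) (metis (mono_tags, lifting) empty_Collect_eq finite.emptyI rangeI)

lemma enum_supp: "is_enum S s \<Longrightarrow> S x \<noteq> 0 \<longleftrightarrow> x \<in> range s"
  unfolding is_enum_def by (metis ecount_zero_iff)

lemma enum_circle: "is_enum S s \<Longrightarrow> rigged_on_circle S \<Longrightarrow> s j \<in> circle"
  using enum_supp[of S s "s j"] by (auto simp: rigged_on_circle_def rsupp_def)

lemma ecount_bij:
  assumes "bij \<sigma>" shows "ecount (\<lambda>j. s (\<sigma> j)) x = ecount s x"
proof -
  have "{j. s (\<sigma> j) = x} = \<sigma> -` {j. s j = x}" by auto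
  moreover have "bij_betw \<sigma> (\<sigma> -` {j. s j = x}) {j. s j = x}"
    using assms by (auto simp: bij_betw_def bij_def intro: inj_on_subset)
  ultimately show ?thesis unfolding ecount_def
    by (metis bij_betw_finite bij_betw_same_card)
qed

lemma suminf_bij_ennreal:
  fixes f :: "nat \<Rightarrow> ennreal"
  assumes "bij \<sigma>" shows "(\<Sum>j. f (\<sigma> j)) = (\<Sum>j. f j)"
  using nn_integral_bij_count_space[of \<sigma> UNIV UNIV f] assms
  by (simp add: nn_integral_count_space_nat)

lemma nat_set_bij:
  fixes A B :: "nat set"
  assumes "finite A \<longleftrightarrow> finite B" "finite A \<Longrightarrow> card A = card B"
  shows "\<exists>g. bij_betw g A B"
proof (cases "finite A")
  case True then show ?thesis using assms finite_same_card_bij by metis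
next
  case False
  then have "infinite B" using assms by auto
  have "bij_betw (enumerate B \<circ> inv_into UNIV (enumerate A)) A B"
    using bij_betw_trans[OF bij_betw_inv_into[OF bij_enumerate[OF False]] bij_enumerate[OF \<open>infinite B\<close>]] .
  then show ?thesis by blast
qed

lemma enum_bij:
  assumes a: "is_enum S a" and u: "is_enum S u"
  shows "\<exists>\<sigma>. bij \<sigma> \<and> (\<forall>j. a (\<sigma> j) = u j)"
proof -
  have "\<forall>x. \<exists>g. bij_betw g {j. u j = x} {j. a j = x}"
  proof
    fix x
    have "ecount u x = ecount a x" using a u by (simp add: is_enum_def)
    then show "\<exists>g. bij_betw g {j. u j = x} {j. a j = x}"
      by (intro nat_set_bij) (auto simp: ecount_def split: if_splits)
  qed
  then obtain g where g: "\<And>x. bij_betw (g x) {j. u j = x} {j. a j = x}" by metis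
  define \<sigma> where "\<sigma> j = g (u j) j" for j
  have au: "a (\<sigma> j) = u j" for j
    using g[of "u j"] unfolding \<sigma>_def bij_betw_def by auto
  have "inj \<sigma>"
  proof (rule injI)
    fix j k assume "\<sigma> j = \<sigma> k"
    then have "u j = u k" using au by metis
    then show "j = k" using \<open>\<sigma> j = \<sigma> k\<close> g[of "u j"] unfolding \<sigma>_def bij_betw_def inj_on_def
      by auto
  qed
  moreover have "surj \<sigma>"
  proof -
    have "i \<in> range \<sigma>" for i
    proof -
      have "i \<in> g (a i) ` {j. u j = a i}" using g[of "a i"] unfolding bij_betw_def by auto
      then obtain j where "u j = a i" "i = g (a i) j" by auto
      then have "\<sigma> j = i" unfolding \<sigma>_def by simp
      then show ?thesis by (metis rangeI)
    qed
    then show ?thesis by auto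
  qed
  ultimately show ?thesis using au bij_def by blast
qed

lemma enum_match:
  assumes u: "is_enum S u" and lt: "rdist S T < c"
  shows "\<exists>v. is_enum T v \<and> sumd u v < c"
proof -
  obtain a b where ab: "is_enum S a" "is_enum T b" "sumd a b < c"
    using lt unfolding rdist_sumd INF_less_iff by auto
  obtain \<sigma> where \<sigma>: "bij \<sigma>" "\<And>j. a (\<sigma> j) = u j" using enum_bij[OF ab(1) u] by blast
  have "is_enum T (\<lambda>j. b (\<sigma> j))" using ab(2) \<sigma>(1) by (simp add: is_enum_def ecount_bij)
  moreover have "sumd u (\<lambda>j. b (\<sigma> j)) = sumd a b"
    unfolding sumd_def using suminf_bij_ennreal[OF \<sigma>(1), of "\<lambda>j. ennreal (arcdist (a j) (b j))"]
    by (simp add: \<sigma>(2)[symmetric])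
  ultimately show ?thesis using ab(3) by auto
qed

lemma rdist_sym_le: "rdist T S \<le> rdist S T"
  unfolding rdist_sumd[of S T]
proof (rule INF_greatest, clarsimp)
  fix s t assume "is_enum S s" "is_enum T t"
  then have "rdist T S \<le> sumd t s" by (rule rdist_le_sumd[rotated])
  also have "sumd t s = sumd s t" by (simp add: sumd_def arcdist_sym)
  finally show "rdist T S \<le> sumd s t" .
qed

lemma rdist_sym: "rdist S T = rdist T S"
  by (simp add: antisym rdist_sym_le)

lemma sumd_triangle:
  assumes "\<And>j. a j \<in> circle" "\<And>j. b j \<in> circle" "\<And>j. c j \<in> circle"
  shows "sumd a c \<le> sumd a b + sumd b c"
proof -
  have "sumd a c \<le> (\<Sum>j. ennreal (arcdist (a j) (b j)) + ennreal (arcdist (b j) (c j)))"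
    unfolding sumd_def
  proof (intro suminf_le summableI)
    fix j
    show "ennreal (arcdist (a j) (c j)) \<le> ennreal (arcdist (a j) (b j)) + ennreal (arcdist (b j) (c j))"
      using arcdist_triangle[OF assms[of j]] arcdist_nonneg assms
      by (simp flip: ennreal_plus add: ennreal_leI)
  qed
  also have "\<dots> = sumd a b + sumd b c" unfolding sumd_def
    by (rule suminf_add[symmetric]) auto
  finally show ?thesis .
qed

lemma rdist_triangle:
  assumes "rigged_on_circle S" "rigged_on_circle T" "rigged_on_circle U"
  shows "rdist S U \<le> rdist S T + rdist T U"
proof (rule ennreal_le_epsilon)
  fix e :: real assume fin: "rdist S T + rdist T U < top" and e: "0 < e"
  have f1: "rdist S T < top" and f2: "rdist T U < top" using fin by (auto simp: top_unique)
  have "rdist S T < rdist S T + ennreal (e/2)"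
    using f1 e by (simp add: ennreal_add_left_cancel_less less_top)
  then obtain a b where ab: "is_enum S a" "is_enum T b" "sumd a b < rdist S T + ennreal (e/2)"
    unfolding rdist_sumd[of S T] INF_less_iff by auto
  have "rdist T U < rdist T U + ennreal (e/2)"
    using f2 e by (simp add: ennreal_add_left_cancel_less less_top)
  then obtain v where v: "is_enum U v" "sumd b v < rdist T U + ennreal (e/2)"
    using enum_match[OF ab(2)] by blast
  have "rdist S U \<le> sumd a v" by (rule rdist_le_sumd[OF ab(1) v(1)])
  also have "\<dots> \<le> sumd a b + sumd b v"
    using assms ab v by (intro sumd_triangle) (auto intro: enum_circle)
  also have "\<dots> \<le> (rdist S T + ennreal (e/2)) + (rdist T U + ennreal (e/2))"
    using ab(3) v(2) by (intro add_mono) auto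
  also have "\<dots> = rdist S T + rdist T U + ennreal e"
    using e by (simp add: algebra_simps flip: ennreal_plus)
  finally show "rdist S U \<le> rdist S T + rdist T U + ennreal e" .
qed


lemma ecount_mono:
  assumes "{j. a j = x} \<subseteq> {j. b j = y}" shows "ecount a x \<le> ecount b y"
proof (cases "finite {j. b j = y}")
  case True
  then have "finite {j. a j = x}" using assms finite_subset by blast
  then show ?thesis using True assms by (simp add: ecount_def card_mono)
qed (simp add: ecount_def)

lemma S_inf_props:
  assumes "S \<in> S_inf"
  shows "rigged_on_circle S" "S 1 = \<infinity>" "\<And>x. x \<in> circle \<Longrightarrow> accpt S x \<Longrightarrow> x = 1"
    "countable (rsupp S)"
  using assms by (auto simp: S_inf_def)

lemma rdist_pos:
  assumes S: "S \<in> S_inf" and T: "T \<in> S_inf" and lt: "T x < S x"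
  shows "0 < rdist S T"
proof -
  have "S x \<noteq> 0" using lt by auto
  then have xc: "x \<in> circle" using S_inf_props(1)[OF S] by (auto simp: rigged_on_circle_def rsupp_def)
  have "T x \<noteq> \<infinity>"
  proof
    assume "T x = \<infinity>" with lt show False by simp
  qed
  then have "x \<noteq> 1" using S_inf_props(2)[OF T] by auto
  then have "\<not> accpt T x" using S_inf_props(3)[OF T xc] by auto
  then obtain U where U: "open U" "x \<in> U" "finite (U \<inter> rsupp T)" "\<And>y. y \<in> U \<Longrightarrow> T y \<noteq> \<infinity>"
    unfolding accpt_def by auto
  define F where "F = U \<inter> rsupp T - {x}"
  have "finite F" using U(3) by (simp add: F_def)
  then have "open (U - F)" using U(1) by (simp add: open_Diff finite_imp_closed)
  moreover have "x \<in> U - F" using U(2) by (simp add: F_def)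
  ultimately obtain \<delta> where \<delta>: "\<delta> > 0" "ball x \<delta> \<subseteq> U - F"
    by (meson open_contains_ball)
  have "ennreal \<delta> \<le> sumd a b" if ab: "is_enum S a" "is_enum T b" for a b
  proof -
    have "\<exists>j. a j = x \<and> b j \<noteq> x"
    proof (rule ccontr)
      assume "\<not> ?thesis"
      then have "{j. a j = x} \<subseteq> {j. b j = x}" by auto
      then have "ecount a x \<le> ecount b x" by (rule ecount_mono)
      then show False using ab lt by (simp add: is_enum_def)
    qed
    then obtain j where j: "a j = x" "b j \<noteq> x" by auto
    have "b j \<in> rsupp T" using enum_supp[OF ab(2), of "b j"] by (auto simp: rsupp_def)
    then have "b j \<notin> ball x \<delta>" using \<delta>(2) j(2) by (auto simp: F_def)
    then have "\<delta> \<le> cmod (a j - b j)" using j(1) by (simp add: dist_norm)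
    also have "\<dots> \<le> arcdist (a j) (b j)"
      using S_inf_props(1) S T ab by (intro arcdist_ge_norm enum_circle) auto
    finally have "ennreal \<delta> \<le> ennreal (arcdist (a j) (b j))" by (rule ennreal_leI)
    also have "\<dots> \<le> sumd a b" unfolding sumd_def
      using sum_le_suminf[OF summableI, of "{j}" "\<lambda>j. ennreal (arcdist (a j) (b j))"] by simp
    finally show ?thesis .
  qed
  then have "ennreal \<delta> \<le> rdist S T" unfolding rdist_sumd by (intro INF_greatest) auto
  moreover have "0 < ennreal \<delta>" using \<delta>(1) by simp
  ultimately show ?thesis by (rule order.strict_trans2[rotated])
qed

lemma rdist_eq_0_imp:
  assumes "S \<in> S_inf" "T \<in> S_inf" "rdist S T = 0" shows "S = T"
proof (rule ccontr)
  assume "S \<noteq> T"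
  then obtain x where "S x \<noteq> T x" by auto
  then have "T x < S x \<or> S x < T x" by auto
  then show False
  proof
    assume "T x < S x"
    then have "0 < rdist S T" by (rule rdist_pos[OF assms(1,2)])
    then show False using assms(3) by simp
  next
    assume "S x < T x"
    then have "0 < rdist T S" by (rule rdist_pos[OF assms(2,1)])
    then show False using assms(3) rdist_sym[of S T] by simp
  qed
qed

lemma one_rigged_circle: "rigged_on_circle one_rigged"
  by (auto simp: rigged_on_circle_def rsupp_def one_rigged_def circle_def)

lemma S_one_props:
  assumes "S \<in> S_one"
  shows "S \<in> S_inf" "rdist S one_rigged < \<infinity>" "\<exists>s. is_enum S s"
proof -
  show "S \<in> S_inf" "rdist S one_rigged < \<infinity>" using assms by (auto simp: S_one_def)
  then show "\<exists>s. is_enum S s" unfolding rdist_sumd INF_less_iff by auto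
qed

lemma S_one_fin:
  assumes "S \<in> S_one" "T \<in> S_one" shows "rdist S T < \<infinity>"
proof -
  have "rdist S T \<le> rdist S one_rigged + rdist one_rigged T"
    using assms one_rigged_circle by (intro rdist_triangle) (auto simp: S_one_def S_inf_def)
  also have "\<dots> < \<infinity>" using S_one_props(2)[OF assms(1)] S_one_props(2)[OF assms(2)]
    by (simp add: rdist_sym[of one_rigged T])
  finally show ?thesis .
qed

lemma rdist_self:
  assumes "S \<in> S_one" shows "rdist S S = 0"
proof -
  obtain s where s: "is_enum S s" using S_one_props(3)[OF assms] by auto
  have "rdist S S \<le> sumd s s" by (rule rdist_le_sumd[OF s s])
  also have "sumd s s = 0" by (simp add: sumd_def)
  finally show ?thesis by simp
qed

lemma S_one_metric: "Metric_space S_one rdist_real"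
proof
  fix x y show "0 \<le> rdist_real x y" by (simp add: rdist_real_def)
  show "rdist_real x y = rdist_real y x" by (simp add: rdist_real_def rdist_sym)
next
  fix x y assume xy: "x \<in> S_one" "y \<in> S_one"
  have fin: "rdist x y < \<infinity>" by (rule S_one_fin[OF xy])
  show "rdist_real x y = 0 \<longleftrightarrow> x = y"
  proof
    assume "rdist_real x y = 0"
    then have "rdist x y = 0 \<or> rdist x y = top" by (simp add: rdist_real_def enn2real_eq_0_iff)
    with fin have "rdist x y = 0" by auto
    then show "x = y" by (rule rdist_eq_0_imp[OF S_one_props(1)[OF xy(1)] S_one_props(1)[OF xy(2)]])
  next
    assume "x = y"
    then show "rdist_real x y = 0" using rdist_self[OF xy(1)] by (simp add: rdist_real_def)
  qed
next
  fix x y z assume xyz: "x \<in> S_one" "y \<in> S_one" "z \<in> S_one"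
  have c: "rigged_on_circle x" "rigged_on_circle y" "rigged_on_circle z"
    using xyz by (auto simp: S_one_def S_inf_def)
  have f1: "rdist x y < \<infinity>" by (rule S_one_fin[OF xyz(1,2)])
  have f2: "rdist y z < \<infinity>" by (rule S_one_fin[OF xyz(2,3)])
  have "rdist x y + rdist y z < top" using f1 f2 by (simp add: less_top)
  then have "enn2real (rdist x z) \<le> enn2real (rdist x y + rdist y z)"
    by (rule enn2real_mono[OF rdist_triangle[OF c]])
  also have "\<dots> = enn2real (rdist x y) + enn2real (rdist y z)"
    using S_one_fin[OF xyz(1,2)] S_one_fin[OF xyz(2,3)] by (intro enn2real_plus) auto
  finally show "rdist_real x z \<le> rdist_real x y + rdist_real y z" by (simp add: rdist_real_def)
qed


lemma (in Metric_space) fast_subseq: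
  assumes "MCauchy \<sigma>"
  shows "\<exists>r. strict_mono r \<and> (\<forall>n. d (\<sigma> (r n)) (\<sigma> (r (Suc n))) < (1/2)^n)"
proof -
  have Nex: "\<forall>n. \<exists>N. \<forall>m m'. N \<le> m \<longrightarrow> N \<le> m' \<longrightarrow> d (\<sigma> m) (\<sigma> m') < (1/2)^n"
    using assms unfolding MCauchy_def by auto
  obtain N where N0: "\<forall>n. \<forall>m m'. N n \<le> m \<longrightarrow> N n \<le> m' \<longrightarrow> d (\<sigma> m) (\<sigma> m') < (1/2)^n"
    using choice[OF Nex] by blast
  have N: "\<And>n m m'. N n \<le> m \<Longrightarrow> N n \<le> m' \<Longrightarrow> d (\<sigma> m) (\<sigma> m') < (1/2)^n"
    using N0 by blast
  define r where "r = rec_nat (N 0) (\<lambda>n rn. max (Suc rn) (N (Suc n)))"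
  have r0: "r 0 = N 0" and rS: "r (Suc n) = max (Suc (r n)) (N (Suc n))" for n
    by (simp_all add: r_def)
  have "strict_mono r" unfolding strict_mono_Suc_iff rS by (simp add: less_max_iff_disj)
  moreover have rN: "N n \<le> r n" for n by (cases n) (simp_all add: r0 rS)
  moreover have "d (\<sigma> (r n)) (\<sigma> (r (Suc n))) < (1/2)^n" for n
    by (rule N) (use rN[of n] rS[of n] in auto)
  ultimately show ?thesis by blast
qed

definition il :: "(nat \<Rightarrow> complex) \<Rightarrow> nat \<Rightarrow> complex" where
  "il s j = (if even j then s (j div 2) else 1)"

lemma il_enum:
  assumes "is_enum S s" "S 1 = \<infinity>" shows "is_enum S (il s)"
  unfolding is_enum_def
proof
  fix x
  show "ecount (il s) x = S x"
  proof (cases "x = 1")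
    case True
    have "range (\<lambda>i::nat. 2*i+1) \<subseteq> {j. il s j = x}" using True by (auto simp: il_def)
    moreover have "infinite (range (\<lambda>i::nat. 2*i+1))" by (rule range_inj_infinite) (auto intro: injI)
    ultimately have "infinite {j. il s j = x}" using finite_subset by blast
    then show ?thesis using True assms(2) by (simp add: ecount_def)
  next
    case False
    have eq: "{j. il s j = x} = (\<lambda>i. 2*i) ` {i. s i = x}"
    proof (intro set_eqI iffI)
      fix j assume "j \<in> {j. il s j = x}"
      then have "even j" "s (j div 2) = x" using False by (auto simp: il_def split: if_splits)
      then show "j \<in> (\<lambda>i. 2*i) ` {i. s i = x}" by (intro image_eqI[of _ _ "j div 2"]) auto
    next
      fix j assume "j \<in> (\<lambda>i. 2*i) ` {i. s i = x}"
      then show "j \<in> {j. il s j = x}" by (auto simp: il_def)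
    qed
    have "inj_on (\<lambda>i::nat. 2*i) {i. s i = x}" by (rule inj_onI) simp
    then have "bij_betw (\<lambda>i::nat. 2*i) {i. s i = x} {j. il s j = x}"
      unfolding eq by (rule inj_on_imp_bij_betw)
    then have "ecount (il s) x = ecount s x" unfolding ecount_def
      by (metis bij_betw_finite bij_betw_same_card)
    then show ?thesis using assms(1) by (simp add: is_enum_def)
  qed
qed

lemma sumd_il: "sumd (il a) (il b) = sumd a b"
proof -
  have "(\<Sum>i. ennreal (arcdist (il a (2*i)) (il b (2*i)))) = (\<Sum>j. ennreal (arcdist (il a j) (il b j)))"
  proof (rule suminf_mono_reindex)
    show "strict_mono (\<lambda>i::nat. 2*i)" by (simp add: strict_mono_def)
    fix n assume "n \<notin> range (\<lambda>i::nat. 2*i)"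
    then have "odd n" by (metis evenE rangeI)
    then show "ennreal (arcdist (il a n) (il b n)) = 0" by (simp add: il_def)
  qed
  then show ?thesis unfolding sumd_def by (simp add: il_def)
qed

lemma is_enum_one_const: "is_enum one_rigged (\<lambda>_. 1)"
  unfolding is_enum_def ecount_def one_rigged_def by (auto simp: zero_enat_def)

lemma is_enum_one_imp:
  assumes "is_enum one_rigged v" shows "v = (\<lambda>_. 1)"
proof (rule ext)
  fix j
  have "one_rigged (v j) \<noteq> 0" using enum_supp[OF assms, of "v j"] by auto
  then show "v j = 1" by (auto simp: one_rigged_def split: if_splits)
qed

lemma one_circle: "1 \<in> circle" by (simp add: circle_def)

lemma sumd_sym: "sumd a b = sumd b a"
  by (simp add: sumd_def arcdist_sym)

lemma partial_le_sumd:
  assumes "\<And>j. a j \<in> circle" "\<And>j. b j \<in> circle"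
  shows "ennreal (\<Sum>j<N. arcdist (a j) (b j)) \<le> sumd a b"
proof -
  have "ennreal (\<Sum>j<N. arcdist (a j) (b j)) = (\<Sum>j<N. ennreal (arcdist (a j) (b j)))"
    using assms arcdist_nonneg by (subst sum_ennreal) auto
  also have "\<dots> \<le> sumd a b" unfolding sumd_def by (rule sum_le_suminf[OF summableI]) auto
  finally show ?thesis .
qed

lemma finite_far:
  assumes fin: "sumd t (\<lambda>_. 1) < \<infinity>" and c: "\<And>j. t j \<in> circle" and r: "r > 0"
  shows "finite {j. r \<le> cmod (t j - 1)}"
proof (rule ccontr)
  assume inf: "infinite {j. r \<le> cmod (t j - 1)}"
  define B where "B = enn2real (sumd t (\<lambda>_. 1))"
  have B: "sumd t (\<lambda>_. 1) = ennreal B" using fin by (simp add: B_def)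
  obtain n :: nat where n: "B < of_nat n * r" using ex_less_of_nat_mult[OF r] by blast
  obtain F where F: "finite F" "card F = n" "F \<subseteq> {j. r \<le> cmod (t j - 1)}"
    using infinite_arbitrarily_large[OF inf] by blast
  have "of_nat n * r = (\<Sum>j\<in>F. r)" using F by simp
  also have "\<dots> \<le> (\<Sum>j\<in>F. arcdist (t j) 1)"
  proof (rule sum_mono)
    fix j assume "j \<in> F"
    then have "r \<le> cmod (t j - 1)" using F by auto
    also have "\<dots> \<le> arcdist (t j) 1" using c one_circle by (rule arcdist_ge_norm)
    finally show "r \<le> arcdist (t j) 1" .
  qed
  finally have le: "of_nat n * r \<le> (\<Sum>j\<in>F. arcdist (t j) 1)" .
  have "ennreal (\<Sum>j\<in>F. arcdist (t j) 1) = (\<Sum>j\<in>F. ennreal (arcdist (t j) 1))"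
    using c one_circle arcdist_nonneg by (subst sum_ennreal) auto
  also have "\<dots> \<le> sumd t (\<lambda>_. 1)" unfolding sumd_def by (rule sum_le_suminf[OF summableI F(1)]) auto
  finally have "ennreal (\<Sum>j\<in>F. arcdist (t j) 1) \<le> ennreal B" using B by simp
  moreover have "0 \<le> B" by (simp add: B_def)
  ultimately have "(\<Sum>j\<in>F. arcdist (t j) 1) \<le> B" by (simp add: ennreal_le_iff)
  then show False using le n by linarith
qed


lemma complete_core:
  assumes T: "\<And>n. T n \<in> S_one" and dT: "\<And>n. rdist (T n) (T (Suc n)) < ennreal ((1/2)^n)"
  shows "\<exists>S\<in>S_one. \<forall>n. rdist_real (T n) S \<le> 2*(1/2)^n"
proof -
  have circ: "\<And>n. rigged_on_circle (T n)" and T1: "\<And>n. T n 1 = \<infinity>"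
    using T by (auto simp: S_one_def S_inf_def)
  obtain e0 where e0: "is_enum (T 0) e0" using S_one_props(3)[OF T] by blast
  have "\<forall>n u. \<exists>v. is_enum (T n) u \<longrightarrow> is_enum (T (Suc n)) v \<and> sumd u v < ennreal ((1/2)^n)"
  proof (intro allI)
    fix n u
    show "\<exists>v. is_enum (T n) u \<longrightarrow> is_enum (T (Suc n)) v \<and> sumd u v < ennreal ((1/2)^n)"
    proof (cases "is_enum (T n) u")
      case True
      obtain v where "is_enum (T (Suc n)) v" "sumd u v < ennreal ((1/2)^n)"
        using enum_match[OF True dT[of n]] by blast
      then show ?thesis by blast
    qed blast
  qed
  then obtain V where V: "\<And>n u. is_enum (T n) u \<Longrightarrow> is_enum (T (Suc n)) (V n u) \<and> sumd u (V n u) < ennreal ((1/2)^n)"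
    by metis
  define e where "e = rec_nat e0 V"
  have e0': "e 0 = e0" and eS: "e (Suc n) = V n (e n)" for n by (simp_all add: e_def)
  have ee: "is_enum (T n) (e n)" for n by (induction n) (simp_all add: e0' e0 eS V)
  have ed: "sumd (e n) (e (Suc n)) < ennreal ((1/2)^n)" for n using V[OF ee[of n]] by (simp add: eS)
  define f where "f n = il (e n)" for n
  have fe: "is_enum (T n) (f n)" for n unfolding f_def using il_enum[OF ee T1] .
  have fd: "sumd (f n) (f (Suc n)) < ennreal ((1/2)^n)" for n unfolding f_def sumd_il by (rule ed)
  have fc: "f n j \<in> circle" for n j using enum_circle[OF fe circ] .
  have fodd: "odd j \<Longrightarrow> f n j = 1" for n j by (simp add: f_def il_def)
  have stp: "(\<Sum>j<N. arcdist (f m j) (f (Suc m) j)) \<le> (1/2)^m" for m N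
  proof -
    have "ennreal (\<Sum>j<N. arcdist (f m j) (f (Suc m) j)) < ennreal ((1/2)^m)"
      using le_less_trans[OF partial_le_sumd[of "f m" "f (Suc m)" N, OF fc fc] fd[of m]] .
    moreover have "0 \<le> (\<Sum>j<N. arcdist (f m j) (f (Suc m) j))"
      by (intro sum_nonneg arcdist_nonneg fc)
    ultimately show ?thesis by (simp add: ennreal_less_iff)
  qed
  have bound: "(\<Sum>j<N. arcdist (f n j) (f m j)) \<le> 2*(1/2)^n - 2*(1/2)^m" if "n \<le> m" for n m N
    using that
  proof (induction m rule: dec_induct)
    case base show ?case by simp
  next
    case (step k)
    have "(\<Sum>j<N. arcdist (f n j) (f (Suc k) j)) \<le> (\<Sum>j<N. arcdist (f n j) (f k j) + arcdist (f k j) (f (Suc k) j))"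
      by (intro sum_mono arcdist_triangle fc)
    also have "\<dots> = (\<Sum>j<N. arcdist (f n j) (f k j)) + (\<Sum>j<N. arcdist (f k j) (f (Suc k) j))"
      by (rule sum.distrib)
    also have "\<dots> \<le> (2*(1/2)^n - 2*(1/2)^k) + (1/2)^k"
      using step.IH stp[of k N] by linarith
    also have "\<dots> = 2*(1/2)^n - 2*(1/2)^Suc k" by simp
    finally show ?case .
  qed
  have ptw: "cmod (f n j - f m j) \<le> 2*(1/2)^n" if nm: "n \<le> m" for n m j
  proof -
    have "cmod (f n j - f m j) \<le> arcdist (f n j) (f m j)" by (rule arcdist_ge_norm[OF fc fc])
    also have "\<dots> = (\<Sum>i\<in>{j}. arcdist (f n i) (f m i))" by simp
    also have "\<dots> \<le> (\<Sum>i<Suc j. arcdist (f n i) (f m i))"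
      by (rule sum_mono2) (auto intro: arcdist_nonneg fc)
    also have "\<dots> \<le> 2*(1/2)^n - 2*(1/2)^m" by (rule bound[OF nm])
    also have "\<dots> \<le> 2*(1/2)^n" by simp
    finally show ?thesis .
  qed
  have cau: "Cauchy (\<lambda>n. f n j)" for j
    unfolding Cauchy_def
  proof (intro allI impI)
    fix \<epsilon> :: real assume "0 < \<epsilon>"
    then obtain M where M: "(1/2)^M < \<epsilon>/2" using real_arch_pow_inv[of "\<epsilon>/2" "1/2"] by auto
    show "\<exists>M. \<forall>m\<ge>M. \<forall>n\<ge>M. dist (f m j) (f n j) < \<epsilon>"
    proof (intro exI allI impI)
      fix m n assume mn: "M \<le> m" "M \<le> n"
      have "dist (f m j) (f n j) \<le> 2*(1/2)^M"
      proof (cases "m \<le> n")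
        case True
        then have "dist (f m j) (f n j) \<le> 2*(1/2)^m" using ptw by (simp add: dist_norm)
        also have "\<dots> \<le> 2*(1/2)^M" using mn by (simp add: power_decreasing)
        finally show ?thesis .
      next
        case False
        then have "dist (f m j) (f n j) \<le> 2*(1/2)^n" using ptw[of n m j] by (simp add: dist_norm norm_minus_commute)
        also have "\<dots> \<le> 2*(1/2)^M" using mn by (simp add: power_decreasing)
        finally show ?thesis .
      qed
      then show "dist (f m j) (f n j) < \<epsilon>" using M by linarith
    qed
  qed
  have "\<forall>j. \<exists>l. (\<lambda>n. f n j) \<longlonglongrightarrow> l" using cau by (simp add: Cauchy_convergent_iff convergent_def)
  then obtain t where t: "\<And>j. (\<lambda>n. f n j) \<longlonglongrightarrow> t j" by metis
  have tc: "t j \<in> circle" for j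
    by (rule Lim_in_closed_set[OF closed_circle _ _ t]) (auto simp: fc)
  have todd: "t j = 1" if "odd j" for j
    using t[of j] fodd[OF that] by (simp add: LIMSEQ_const_iff)
  have lim_bound: "(\<Sum>j<N. arcdist (f n j) (t j)) \<le> 2*(1/2)^n" for n N
  proof (rule LIMSEQ_le_const2)
    show "(\<lambda>m. \<Sum>j<N. arcdist (f n j) (f m j)) \<longlonglongrightarrow> (\<Sum>j<N. arcdist (f n j) (t j))"
    proof (intro tendsto_sum)
      fix j
      show "(\<lambda>m. arcdist (f n j) (f m j)) \<longlonglongrightarrow> arcdist (f n j) (t j)"
        using continuous_on_tendsto_compose[OF continuous_on_arcdist[OF fc] t tc] fc by simp
    qed
    show "\<exists>M. \<forall>m\<ge>M. (\<Sum>j<N. arcdist (f n j) (f m j)) \<le> 2*(1/2)^n"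
    proof (intro exI allI impI)
      fix m assume "n \<le> m"
      moreover have "0 \<le> (1/2::real)^m" by simp
      ultimately show "(\<Sum>j<N. arcdist (f n j) (f m j)) \<le> 2*(1/2)^n" using bound[of n m N] by linarith
    qed
  qed
  have sumd_bound: "sumd (f n) t \<le> ennreal (2*(1/2)^n)" for n
    unfolding sumd_def
  proof (rule suminf_le_const[OF summableI])
    fix N
    have "(\<Sum>j<N. ennreal (arcdist (f n j) (t j))) = ennreal (\<Sum>j<N. arcdist (f n j) (t j))"
      using arcdist_nonneg[OF fc tc] by (subst sum_ennreal) auto
    also have "\<dots> \<le> ennreal (2*(1/2)^n)" using lim_bound by (rule ennreal_leI)
    finally show "sum (\<lambda>j. ennreal (arcdist (f n j) (t j))) {..<N} \<le> ennreal (2*(1/2)^n)" .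
  qed
  define S where "S = ecount t"
  have St: "is_enum S t" by (simp add: is_enum_def S_def)
  have rS: "rsupp S = range t" using ecount_zero_iff by (auto simp: rsupp_def S_def)
  have c1fin: "sumd t (\<lambda>_. 1) < \<infinity>"
  proof -
    obtain v where v: "is_enum one_rigged v" "sumd (f 0) v < \<infinity>"
      using enum_match[OF fe[of 0]] S_one_props(2)[OF T[of 0]] by blast
    have v1: "v = (\<lambda>_. 1)" by (rule is_enum_one_imp[OF v(1)])
    have "sumd t (\<lambda>_. 1) \<le> sumd t (f 0) + sumd (f 0) (\<lambda>_. 1)"
      by (rule sumd_triangle) (auto simp: tc fc one_circle)
    also have "\<dots> < \<infinity>"
    proof -
      have "sumd t (f 0) \<le> ennreal 2" using sumd_bound[of 0] by (simp add: sumd_sym)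
      then have "sumd t (f 0) < \<infinity>" by (rule le_less_trans) simp
      then have "sumd t (f 0) \<noteq> \<infinity>" by simp
      moreover have "sumd (f 0) (\<lambda>_. 1) \<noteq> \<infinity>" using v v1 by simp
      ultimately show ?thesis by (simp add: less_top[symmetric])
    qed
    finally show ?thesis .
  qed
  have Sin: "S \<in> S_inf"
    unfolding S_inf_def
  proof (intro CollectI conjI ballI impI)
    show "rigged_on_circle S" using rS tc by (auto simp: rigged_on_circle_def)
    show "countable (rsupp S)" using rS by simp
    show "S 1 = \<infinity>"
    proof -
      have "range (\<lambda>i::nat. 2*i+1) \<subseteq> {j. t j = 1}" using todd by auto
      moreover have "infinite (range (\<lambda>i::nat. 2*i+1))" by (rule range_inj_infinite) (auto intro: injI)
      ultimately have "infinite {j. t j = 1}" using finite_subset by blast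
      then show ?thesis by (simp add: S_def ecount_def)
    qed
    fix x assume xc: "x \<in> circle" and acc: "accpt S x"
    show "x = 1"
    proof (rule ccontr)
      assume x1: "x \<noteq> 1"
      define r where "r = cmod (x - 1) / 2"
      have r: "r > 0" using x1 by (simp add: r_def)
      define K where "K = {j. r \<le> cmod (t j - 1)}"
      have K: "finite K" unfolding K_def by (rule finite_far[OF c1fin tc r])
      have near: "j \<in> K" if "t j \<in> ball x r" for j
      proof -
        have "cmod (x - 1) \<le> cmod (x - t j) + cmod (t j - 1)"
          using norm_triangle_ineq[of "x - t j" "t j - 1"] by simp
        moreover have "cmod (x - t j) < r" using that by (simp add: dist_norm)
        ultimately show ?thesis by (simp add: K_def r_def)
      qed
      have "ball x r \<inter> rsupp S \<subseteq> t ` K" using near rS by auto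
      then have "finite (ball x r \<inter> rsupp S)" using K finite_subset by blast
      moreover have "S y \<noteq> \<infinity>" if "y \<in> ball x r" for y
      proof -
        have "{j. t j = y} \<subseteq> K" using near that by auto
        then have "finite {j. t j = y}" using K finite_subset by blast
        then show ?thesis by (simp add: S_def ecount_def)
      qed
      moreover have "open (ball x r) \<and> x \<in> ball x r" using r by simp
      then have "infinite (ball x r \<inter> rsupp S) \<or> (\<exists>y\<in>ball x r. S y = \<infinity>)"
        using acc unfolding accpt_def by blast
      ultimately show False by blast
    qed
  qed
  have Sone: "S \<in> S_one"
    using Sin rdist_le_sumd[OF St is_enum_one_const] c1fin by (auto simp: S_one_def)
  have "rdist_real (T n) S \<le> 2*(1/2)^n" for n
  proof -
    have "rdist (T n) S \<le> ennreal (2*(1/2)^n)"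
      using rdist_le_sumd[OF fe St] sumd_bound by (rule order_trans)
    then show ?thesis unfolding rdist_real_def by (intro enn2real_leI) auto
  qed
  then show ?thesis using Sone by blast
qed


theorem mainTheorem7:
  shows "Metric_space S_one rdist_real \<and> Metric_space.mcomplete S_one rdist_real"
proof
  show "Metric_space S_one rdist_real" by (rule S_one_metric)
  interpret M: Metric_space S_one rdist_real by (rule S_one_metric)
  show "M.mcomplete" unfolding M.mcomplete_def
  proof (intro allI impI)
    fix \<sigma> assume cau: "M.MCauchy \<sigma>"
    obtain r where r: "strict_mono r" "\<And>n. rdist_real (\<sigma> (r n)) (\<sigma> (r (Suc n))) < (1/2)^n"
      using M.fast_subseq[OF cau] by blast
    have inS: "\<sigma> n \<in> S_one" for n using cau by (auto simp: M.MCauchy_def)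
    have "rdist (\<sigma> (r n)) (\<sigma> (r (Suc n))) < ennreal ((1/2)^n)" for n
    proof -
      have "rdist (\<sigma> (r n)) (\<sigma> (r (Suc n))) = ennreal (rdist_real (\<sigma> (r n)) (\<sigma> (r (Suc n))))"
        using S_one_fin[OF inS inS] by (simp add: rdist_real_def)
      moreover have "ennreal (rdist_real (\<sigma> (r n)) (\<sigma> (r (Suc n)))) < ennreal ((1/2)^n)"
        by (rule ennreal_lessI) (use r(2)[of n] in auto)
      ultimately show ?thesis by simp
    qed
    then have "\<exists>S\<in>S_one. \<forall>n. rdist_real (\<sigma> (r n)) S \<le> 2*(1/2)^n"
      by (rule complete_core[of "\<lambda>n. \<sigma> (r n)", OF inS])
    then obtain S where S: "S \<in> S_one" "\<And>n. rdist_real (\<sigma> (r n)) S \<le> 2*(1/2)^n"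
      by blast
    have "limitin M.mtopology (\<sigma> \<circ> r) S sequentially"
      unfolding M.limitin_metric
    proof (intro conjI allI impI)
      show "S \<in> S_one" by (rule S(1))
      fix \<epsilon> :: real assume "0 < \<epsilon>"
      then obtain N where N: "(1/2)^N < \<epsilon>/2" using real_arch_pow_inv[of "\<epsilon>/2" "1/2"] by auto
      show "\<forall>\<^sub>F n in sequentially. (\<sigma> \<circ> r) n \<in> S_one \<and> rdist_real ((\<sigma> \<circ> r) n) S < \<epsilon>"
        unfolding eventually_sequentially
      proof (intro exI allI impI)
        fix n assume "N \<le> n"
        then have "(1/2::real)^n \<le> (1/2)^N" by (simp add: power_decreasing)
        then have "2*(1/2::real)^n \<le> 2*(1/2)^N" by simp
        then have "rdist_real (\<sigma> (r n)) S \<le> 2*(1/2)^N" by (rule order_trans[OF S(2)])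
        then have "rdist_real (\<sigma> (r n)) S < \<epsilon>" using N by simp
        then show "(\<sigma> \<circ> r) n \<in> S_one \<and> rdist_real ((\<sigma> \<circ> r) n) S < \<epsilon>"
          using inS by simp
      qed
    qed
    then have "limitin M.mtopology \<sigma> S sequentially"
      by (rule M.MCauchy_convergent_subsequence[OF cau r(1)])
    then show "\<exists>x. limitin M.mtopology \<sigma> x sequentially" by blast
  qed
qed

end
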